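(* Let $f$ be a polynomial with integer coefficients of degree $r\ge3$ with positive leading coefficient, positive and strictly increasing on $[0,\infty)$, and let $g_N(x)=f'(x)\left(1-\frac{f(x)}{f(N)}\right)\big/\int_0^N f'(t)\left(1-\frac{f(t)}{f(N)}\right)dt$. Let $\mathcal{I}_N=\bigcup_{a\in\mathbb{Z}}[a-N^{-r+\frac1r},a+N^{-r+\frac1r}]$. Then \[ \liminf_{N\to\infty}\inf_{\alpha\in\mathcal{I}_N}\sum_{j=1}^N g_N(j)\left[e(\alpha f(j))+e(-\alpha f(j))\right]\ge0. \]
   Context: $e(\alpha)=e^{2\pi i\alpha}$. *)

theory Defs
  imports "HOL-Analysis.Analysis" "HOL-Computational_Algebra.Polynomial" "HOL-Library.Liminf_Limsup"
begin

definition e :: "real \<Rightarrow> complex" where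
  "e \<alpha> = exp (2 * of_real pi * \<i> * of_real \<alpha>)"

definition fR :: "int poly \<Rightarrow> real \<Rightarrow> real" where
  "fR f x = poly (map_poly real_of_int f) x"

definition fR' :: "int poly \<Rightarrow> real \<Rightarrow> real" where
  "fR' f x = poly (pderiv (map_poly real_of_int f)) x"

definition gN :: "int poly \<Rightarrow> nat \<Rightarrow> real \<Rightarrow> real" where
  "gN f N x = fR' f x * (1 - fR f x / fR f (real N)) /
     integral {0..real N} (\<lambda>t. fR' f t * (1 - fR f t / fR f (real N)))"

definition IN :: "nat \<Rightarrow> nat \<Rightarrow> real set" where
  "IN r N = (\<Union>a::int. {real_of_int a - real N powr (- real r + 1 / real r) ..
                         real_of_int a + real N powr (- real r + 1 / real r)})"

end

theory Submission
  imports Defs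
begin

lemma polybound:
  fixes p :: "real poly" and x n :: real
  assumes "degree p \<le> k" "1 \<le> n" "\<bar>x\<bar> \<le> n"
  shows "\<bar>poly p x\<bar> \<le> (\<Sum>i\<le>k. \<bar>coeff p i\<bar>) * n ^ k"
proof -
  have "poly p x = (\<Sum>i\<le>k. coeff p i * x ^ i)"
  proof -
    have "poly p x = (\<Sum>i\<le>degree p. coeff p i * x ^ i)" by (rule poly_altdef)
    also have "\<dots> = (\<Sum>i\<le>k. coeff p i * x ^ i)"
      by (rule sum.mono_neutral_left) (auto simp: assms coeff_eq_0)
    finally show ?thesis .
  qed
  also have "\<bar>\<dots>\<bar> \<le> (\<Sum>i\<le>k. \<bar>coeff p i * x ^ i\<bar>)" by (rule sum_abs)
  also have "\<dots> \<le> (\<Sum>i\<le>k. \<bar>coeff p i\<bar> * n ^ k)"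
  proof (rule sum_mono)
    fix i assume "i \<in> {..k}"
    have "\<bar>x\<bar> ^ i \<le> n ^ i" using assms by (intro power_mono) auto
    also have "n ^ i \<le> n ^ k" using assms \<open>i \<in> {..k}\<close> by (intro power_increasing) auto
    finally show "\<bar>coeff p i * x ^ i\<bar> \<le> \<bar>coeff p i\<bar> * n ^ k"
      by (simp add: abs_mult power_abs mult_left_mono)
  qed
  also have "\<dots> = (\<Sum>i\<le>k. \<bar>coeff p i\<bar>) * n ^ k" by (simp add: sum_distrib_right)
  finally show ?thesis .
qed

lemma fR_int: "fR f (of_int k) = of_int (poly f k)"
  unfolding fR_def by (induct f) (auto simp: map_poly_pCons)

lemma Re_e: "Re (e x) = cos (2 * pi * x)"
  unfolding e_def by (simp add: Re_exp)

lemma cos_shift: "cos (2 * pi * ((of_int a + b) * of_int k)) = cos (2 * pi * b * of_int k)"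
proof -
  have "2 * pi * ((of_int a + b) * of_int k) = 2 * pi * b * of_int k + (2*pi) * of_int (a*k)"
    by (simp add: algebra_simps)
  moreover have "cos ((2*pi) * of_int (a*k)) = 1" "sin ((2*pi) * of_int (a*k)) = 0"
    using cos_int_2pin[of "a*k"] sin_int_2pin[of "a*k"] by auto
  ultimately show ?thesis by (simp only: cos_add)
qed

lemma sum_vs_int:
  fixes h h' :: "real \<Rightarrow> real" and N :: nat
  assumes der: "\<And>x. (h has_real_derivative h' x) (at x)"
   and bd: "\<And>x. 0 \<le> x \<Longrightarrow> x \<le> real N \<Longrightarrow> \<bar>h' x\<bar> \<le> B"
  shows "(\<Sum>j=1..N. h (real j)) \<ge> integral {0..real N} h - real N * B"
proof -
  have cont: "continuous_on S h" for S
    using der by (meson DERIV_isCont continuous_at_imp_continuous_on)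
  have int: "h integrable_on {a..b}" for a b by (rule integrable_continuous_real[OF cont])
  have "n \<le> N \<Longrightarrow> (\<Sum>j=1..n. h (real j)) \<ge> integral {0..real n} h - real n * B" for n
  proof (induction n)
    case 0
    then show ?case by simp
  next
    case (Suc n)
    have B0: "0 \<le> B" using bd[of 0] by auto
    have pt: "h x \<le> h (real (Suc n)) + B" if x: "real n \<le> x" "x \<le> real (Suc n)" for x
    proof (cases "x = real (Suc n)")
      case True then show ?thesis using B0 by simp
    next
      case False
      then have "x < real (Suc n)" using x by simp
      from MVT2[OF this, of h h'] der obtain z where
        z: "x < z" "z < real (Suc n)" "h (real (Suc n)) - h x = (real (Suc n) - x) * h' z"
        by blast
      have "\<bar>h' z\<bar> \<le> B" using z x Suc.prems by (intro bd) auto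
      moreover have "real (Suc n) - x \<le> 1" "0 \<le> real (Suc n) - x" using x by auto
      ultimately have "(real (Suc n) - x) * (- h' z) \<le> (real (Suc n) - x) * B"
        by (intro mult_left_mono) auto
      also have "\<dots> \<le> 1 * B" using B0 \<open>real (Suc n) - x \<le> 1\<close> by (intro mult_right_mono) auto
      finally have "(real (Suc n) - x) * (- h' z) \<le> B" by simp
      then show ?thesis using z by (simp add: algebra_simps)
    qed
    have "integral {real n..real (Suc n)} h \<le> integral {real n..real (Suc n)} (\<lambda>_. h (real (Suc n)) + B)"
      by (rule integral_le[OF int]) (use pt in auto)
    also have "\<dots> = h (real (Suc n)) + B" by simp
    finally have 1: "integral {real n..real (Suc n)} h \<le> h (real (Suc n)) + B" .
    have 2: "integral {0..real n} h + integral {real n..real (Suc n)} h = integral {0..real (Suc n)} h"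
      by (rule Henstock_Kurzweil_Integration.integral_combine[OF _ _ int]) auto
    have "integral {0..real n} h - real n * B \<le> (\<Sum>j=1..n. h (real j))" using Suc by simp
    then show ?case using 1 2 by (simp add: algebra_simps)
  qed
  then show ?thesis by simp
qed

lemma one_minus_cos: "1 - cos (x::real) \<le> x\<^sup>2 / 2"
proof -
  have "cos x = 1 - 2 * sin (x/2) ^ 2" using cos_double_sin[of "x/2"] by simp
  moreover have "sin (x/2)^2 \<le> (x/2)^2"
    using abs_sin_x_le_abs_x[of "x/2"] by (metis abs_ge_zero power2_abs power_mono)
  ultimately show ?thesis by (simp add: power_divide)
qed

definition GG :: "real \<Rightarrow> real \<Rightarrow> real \<Rightarrow> real" where
  "GG M \<theta> u = (if \<theta> = 0 then u - u\<^sup>2 / (2*M)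
       else (1 - u/M) * sin (\<theta> * u) / \<theta> - cos (\<theta> * u) / (\<theta>\<^sup>2 * M))"

lemma GG_deriv:
  assumes "M \<noteq> 0"
  shows "(GG M \<theta> has_real_derivative ((1 - u/M) * cos (\<theta> * u))) (at u)"
proof (cases "\<theta> = 0")
  case True
  show ?thesis unfolding GG_def using True assms
    by (auto intro!: derivative_eq_intros simp: field_simps power2_eq_square)
next
  case False
  have "((\<lambda>u. (1 - u/M) * sin (\<theta> * u) / \<theta> - cos (\<theta> * u) / (\<theta>\<^sup>2 * M)) has_real_derivative
     ((1 - u/M) * cos (\<theta> * u))) (at u)"
    using False assms
    by (auto intro!: derivative_eq_intros simp: field_simps power2_eq_square)
  then show ?thesis unfolding GG_def using False by simp
qed

lemma int_formula:
  fixes F :: "real poly" and M \<theta> :: real and N :: nat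
  assumes "M \<noteq> 0"
  shows "((\<lambda>x. poly (pderiv F) x * (1 - poly F x / M) * cos (\<theta> * poly F x)) has_integral
          (GG M \<theta> (poly F (real N)) - GG M \<theta> (poly F 0))) {0..real N}"
proof -
  have "((\<lambda>x. GG M \<theta> (poly F x)) has_real_derivative
      (poly (pderiv F) x * (1 - poly F x / M) * cos (\<theta> * poly F x))) (at x)" for x
    using DERIV_chain2[OF GG_deriv[OF assms] poly_DERIV[of F x]]
    by (simp add: mult_ac)
  then show ?thesis
    by (intro fundamental_theorem_of_calculus)
       (auto simp: has_real_derivative_iff_has_vector_derivative[symmetric] intro: has_field_derivative_at_within)
qed

lemma GG_bound:
  assumes "0 < f0" "f0 \<le> M"
  shows "GG M \<theta> M - GG M \<theta> f0 \<ge> -2 * f0"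
proof (cases "\<theta> = 0")
  case True
  have "GG M \<theta> M - GG M \<theta> f0 = (M - f0)\<^sup>2 / (2*M)"
    using True assms by (simp add: GG_def field_simps power2_eq_square)
  also have "\<dots> \<ge> 0" using assms by simp
  finally show ?thesis using assms by linarith
next
  case False
  have M0: "M > 0" using assms by simp
  have eq: "GG M \<theta> M - GG M \<theta> f0 = (cos (\<theta>*f0) - cos (\<theta>*M)) / (\<theta>\<^sup>2 * M)
      - (1 - f0/M) * (sin (\<theta> * f0) / \<theta>)"
    using False M0 by (simp add: GG_def field_simps)
  have "cos (\<theta>*f0) - cos (\<theta>*M) \<ge> - ((\<theta>*f0)\<^sup>2/2)"
    using one_minus_cos[of "\<theta>*f0"] cos_le_one[of "\<theta>*M"] by linarith
  then have "(cos (\<theta>*f0) - cos (\<theta>*M)) / (\<theta>\<^sup>2 * M) \<ge> - ((\<theta>*f0)\<^sup>2/2) / (\<theta>\<^sup>2 * M)"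
    using False M0 by (intro divide_right_mono) auto
  also have "- ((\<theta>*f0)\<^sup>2/2) / (\<theta>\<^sup>2 * M) = - (f0 * (f0 / M)) / 2"
    using False M0 by (simp add: field_simps power2_eq_square)
  also have "\<dots> \<ge> - f0 / 2" using assms M0 by (simp add: field_simps mult_left_mono)
  finally have 1: "(cos (\<theta>*f0) - cos (\<theta>*M)) / (\<theta>\<^sup>2 * M) \<ge> - f0 / 2" .
  have "\<bar>sin (\<theta> * f0) / \<theta>\<bar> \<le> f0"
    using abs_sin_x_le_abs_x[of "\<theta>*f0"] False assms
    by (simp add: abs_mult divide_le_eq pos_divide_le_eq mult.commute)
  moreover have "0 \<le> 1 - f0/M" "1 - f0/M \<le> 1" using assms M0 by auto
  ultimately have "\<bar>(1 - f0/M) * (sin (\<theta> * f0) / \<theta>)\<bar> \<le> 1 * f0"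
    unfolding abs_mult by (intro mult_mono) auto
  then have "(1 - f0/M) * (sin (\<theta> * f0) / \<theta>) \<le> f0" using abs_le_D1[of "(1 - f0/M) * (sin (\<theta> * f0) / \<theta>)" "1*f0"] by linarith
  then show ?thesis using eq 1 assms by linarith
qed

lemma main_est:
  fixes F :: "real poly" and N :: nat and M A1 A2 \<theta> :: real
  assumes pos: "\<And>x. 0 \<le> x \<Longrightarrow> poly F x > 0"
    and mono: "\<And>x. 0 \<le> x \<Longrightarrow> x \<le> real N \<Longrightarrow> poly F x \<le> poly F (real N)"
    and Mdef: "M = poly F (real N)" and M4: "M \<ge> 4 * poly F 0"
    and b1: "\<And>x. 0 \<le> x \<Longrightarrow> x \<le> real N \<Longrightarrow> \<bar>poly (pderiv F) x\<bar> \<le> A1"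
    and b2: "\<And>x. 0 \<le> x \<Longrightarrow> x \<le> real N \<Longrightarrow> \<bar>poly (pderiv (pderiv F)) x\<bar> \<le> A2"
  shows "2 / integral {0..real N} (\<lambda>t. poly (pderiv F) t * (1 - poly F t / M)) *
           (\<Sum>j=1..N. poly (pderiv F) (real j) * (1 - poly F (real j) / M) * cos (\<theta> * poly F (real j)))
         \<ge> - (8 / M) * (2 * poly F 0 + real N * (A2 + A1\<^sup>2 / M + \<bar>\<theta>\<bar> * A1\<^sup>2))"
proof -
  define f0 where "f0 = poly F 0"
  have f0: "f0 > 0" using pos[of 0] by (simp add: f0_def)
  have M0: "M > 0" using M4 f0 f0_def by linarith
  have f0M: "f0 \<le> M" using M4 f0 f0_def by linarith
  define h where "h x = poly (pderiv F) x * (1 - poly F x / M) * cos (\<theta> * poly F x)" for x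
  define h' where "h' x = poly (pderiv (pderiv F)) x * (1 - poly F x / M) * cos (\<theta> * poly F x)
      - poly (pderiv F) x * poly (pderiv F) x / M * cos (\<theta> * poly F x)
      - poly (pderiv F) x * (1 - poly F x / M) * (sin (\<theta> * poly F x) * \<theta> * poly (pderiv F) x)" for x
  have der: "(h has_real_derivative h' x) (at x)" for x
    unfolding h_def h'_def using M0
    by (auto intro!: derivative_eq_intros simp: field_simps)
  define B where "B = A2 + A1\<^sup>2 / M + \<bar>\<theta>\<bar> * A1\<^sup>2"
  have hb: "\<bar>h' x\<bar> \<le> B" if x: "0 \<le> x" "x \<le> real N" for x
  proof -
    define a where "a = \<bar>poly (pderiv F) x\<bar>"
    define b where "b = \<bar>poly (pderiv (pderiv F)) x\<bar>"
    define u where "u = \<bar>1 - poly F x / M\<bar>"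
    define c where "c = \<bar>cos (\<theta> * poly F x)\<bar>"
    define s where "s = \<bar>sin (\<theta> * poly F x)\<bar>"
    have a: "0 \<le> a" "a \<le> A1" using b1[OF x] by (auto simp: a_def)
    have b: "0 \<le> b" "b \<le> A2" using b2[OF x] by (auto simp: b_def)
    have "poly F x > 0" "poly F x \<le> M" using pos[OF x(1)] mono[OF x] Mdef by auto
    then have u: "0 \<le> u" "u \<le> 1" using M0 by (auto simp: u_def field_simps)
    have c: "0 \<le> c" "c \<le> 1" by (auto simp: c_def)
    have s: "0 \<le> s" "s \<le> 1" by (auto simp: s_def)
    define T1 where "T1 = poly (pderiv (pderiv F)) x * (1 - poly F x / M) * cos (\<theta> * poly F x)"
    define T2 where "T2 = poly (pderiv F) x * poly (pderiv F) x / M * cos (\<theta> * poly F x)"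
    define T3 where "T3 = poly (pderiv F) x * (1 - poly F x / M) * (sin (\<theta> * poly F x) * \<theta> * poly (pderiv F) x)"
    have "h' x = T1 - T2 - T3" unfolding h'_def T1_def T2_def T3_def ..
    moreover have "\<bar>T1 - T2 - T3\<bar> \<le> \<bar>T1\<bar> + \<bar>T2\<bar> + \<bar>T3\<bar>"
      using abs_triangle_ineq4[of "T1 - T2" T3] abs_triangle_ineq4[of T1 T2] by linarith
    moreover have "\<bar>T1\<bar> = b * u * c" unfolding T1_def b_def u_def c_def by (simp only: abs_mult)
    moreover have "\<bar>T2\<bar> = a * a / M * c" unfolding T2_def a_def c_def using M0
      by (simp add: abs_mult abs_divide)
    moreover have "\<bar>T3\<bar> = a * u * (s * \<bar>\<theta>\<bar> * a)" unfolding T3_def a_def u_def s_def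
      by (simp only: abs_mult)
    ultimately have "\<bar>h' x\<bar> \<le> b * u * c + a * a / M * c + a * u * (s * \<bar>\<theta>\<bar> * a)" by simp
    also have "b * u * c \<le> A2 * 1 * 1" using a b u c by (intro mult_mono) auto
    also have "a * a / M * c \<le> A1 * A1 / M * 1" using a c M0
      by (intro mult_mono divide_right_mono) auto
    also have "a * u * (s * \<bar>\<theta>\<bar> * a) \<le> A1 * 1 * (1 * \<bar>\<theta>\<bar> * A1)" using a u s
      by (intro mult_mono) auto
    finally show ?thesis by (simp add: B_def power2_eq_square mult_ac)
  qed
  have sum: "(\<Sum>j=1..N. h (real j)) \<ge> integral {0..real N} h - real N * B"
    by (rule sum_vs_int[OF der hb])
  have I: "(h has_integral (GG M \<theta> M - GG M \<theta> f0)) {0..real N}"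
    using int_formula[of M F \<theta> N] M0 unfolding h_def[abs_def] by (simp add: Mdef f0_def)
  have Ib: "integral {0..real N} h \<ge> -2 * f0"
    using integral_unique[OF I] GG_bound[OF f0 f0M] by simp
  have Z: "((\<lambda>t. poly (pderiv F) t * (1 - poly F t / M)) has_integral (GG M 0 M - GG M 0 f0)) {0..real N}"
    using int_formula[of M F 0 N] M0 by (simp add: Mdef f0_def)
  have Zeq: "GG M 0 M - GG M 0 f0 = (M - f0)\<^sup>2 / (2*M)"
    using M0 by (simp add: GG_def field_simps power2_eq_square)
  define Zv where "Zv = integral {0..real N} (\<lambda>t. poly (pderiv F) t * (1 - poly F t / M))"
  have Zv: "Zv = (M - f0)\<^sup>2 / (2*M)" using integral_unique[OF Z] Zeq Zv_def by simp
  have "(3/4*M)\<^sup>2 \<le> (M - f0)\<^sup>2" using M4 f0 f0_def M0 by (intro power_mono) auto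
  moreover have "(3/4*M)\<^sup>2 = 9/16 * (M*M)" by (simp add: power2_eq_square)
  moreover have "0 \<le> M*M" by simp
  ultimately have q: "M/4*(2*M) \<le> (M - f0)\<^sup>2" by linarith
  have "M / 4 \<le> Zv" unfolding Zv using M0 q by (simp add: pos_le_divide_eq)
  then have Zpos: "Zv > 0" and ZM: "2 / Zv \<le> 8 / M" using M0 by (auto simp: field_simps)
  have A20: "0 \<le> A2" using b2[of 0] by (meson abs_ge_zero order_trans of_nat_0_le_iff order_refl)
  have B0: "0 \<le> B" unfolding B_def using M0 A20 by (intro add_nonneg_nonneg) auto
  define X where "X = 2 * f0 + real N * B"
  have X0: "0 \<le> X" using f0 B0 by (simp add: X_def)
  have "(\<Sum>j=1..N. h (real j)) \<ge> - X" using sum Ib by (simp add: X_def)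
  then have "2 / Zv * (\<Sum>j=1..N. h (real j)) \<ge> 2 / Zv * (- X)"
    using Zpos by (intro mult_left_mono) auto
  moreover have "2 / Zv * (- X) \<ge> 8 / M * (- X)"
    using mult_right_mono[OF ZM X0] by simp
  ultimately have "2 / Zv * (\<Sum>j=1..N. h (real j)) \<ge> - (8 / M) * X" by simp
  then show ?thesis by (simp add: Zv_def h_def X_def B_def f0_def)
qed

theorem lemma12:
  fixes f :: "int poly" and r :: nat
  assumes "degree f = r" and "r \<ge> 3" and "lead_coeff f > 0"
    and "\<forall>x\<ge>0. fR f x > 0"
    and "strict_mono_on {0..} (fR f)"
  shows "liminf (\<lambda>N. INF \<alpha>\<in>IN r N.
            ereal (Re (\<Sum>j=1..N. complex_of_real (gN f N (real j)) *
                   (e (\<alpha> * fR f (real j)) + e (- \<alpha> * fR f (real j)))))) \<ge> 0"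
proof -
  define F where "F = map_poly real_of_int f"
  have fRF: "fR f x = poly F x" for x by (simp add: fR_def F_def)
  have fRF': "fR' f x = poly (pderiv F) x" for x by (simp add: fR'_def F_def)
  have degF: "degree F = r" unfolding F_def using assms(1) by (simp add: degree_map_poly)
  have cF: "coeff F r \<ge> 1"
  proof -
    have "coeff F r = real_of_int (lead_coeff f)" unfolding F_def using assms(1)
      by (simp add: coeff_map_poly)
    then show ?thesis using assms(3) by simp
  qed
  obtain s where rs: "r = s + 3" using assms(2) by (metis add.commute le_Suc_ex)
  define K1 where "K1 = (\<Sum>i\<le>r-1. \<bar>coeff (pderiv F) i\<bar>)"
  define K2 where "K2 = (\<Sum>i\<le>r-2. \<bar>coeff (pderiv (pderiv F)) i\<bar>)"
  define R where "R = F - monom (coeff F r) r"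
  define KR where "KR = (\<Sum>i\<le>r-1. \<bar>coeff R i\<bar>)"
  define f0 where "f0 = poly F 0"
  have f0: "f0 > 0" using assms(4) by (simp add: f0_def fRF)
  have K10: "K1 \<ge> 0" "K2 \<ge> 0" "KR \<ge> 0" unfolding K1_def K2_def KR_def by (auto intro: sum_nonneg)
  have pos: "\<And>x. 0 \<le> x \<Longrightarrow> poly F x > 0" using assms(4) by (simp add: fRF)
  have mono: "poly F x \<le> poly F y" if "0 \<le> x" "x \<le> y" for x y
    using strict_mono_on_leD[OF assms(5), of x y] that by (simp add: fRF)
  have degF1: "degree (pderiv F) \<le> r - 1" by (simp add: degree_pderiv degF)
  have degF2: "degree (pderiv (pderiv F)) \<le> r - 2" by (simp add: degree_pderiv degF)
  have degR: "degree R \<le> r - 1"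
  proof (rule degree_le, intro allI impI)
    fix i assume "r - 1 < i"
    then have "i \<ge> r" using rs by simp
    then show "coeff R i = 0" unfolding R_def
      by (cases "i = r") (auto simp: coeff_monom degF coeff_eq_0)
  qed
  have polyR: "poly F x = coeff F r * x ^ r + poly R x" for x
    by (simp add: R_def poly_monom)
  define E where "E n = (32 * f0 + 16 * K2 + 32 * K1\<^sup>2) / real n
      + 32 * pi * K1\<^sup>2 * (real n powr (1 / real r - 1))" for n :: nat
  have Elim: "E \<longlonglongrightarrow> 0"
  proof -
    have "(\<lambda>n. real n powr (1 / real r - 1)) \<longlonglongrightarrow> 0"
      using assms(2) by (intro tendsto_neg_powr filterlim_real_sequentially) (auto simp: field_simps)
    then have "(\<lambda>n. 32 * pi * K1\<^sup>2 * (real n powr (1 / real r - 1))) \<longlonglongrightarrow> 32 * pi * K1\<^sup>2 * 0"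
      by (intro tendsto_intros)
    moreover have "(\<lambda>n. (32 * f0 + 16 * K2 + 32 * K1\<^sup>2) / real n) \<longlonglongrightarrow> 0"
      by (rule lim_const_over_n)
    ultimately show ?thesis unfolding E_def using tendsto_add by fastforce
  qed
  define S where "S N \<alpha> = Re (\<Sum>j=1..N. complex_of_real (gN f N (real j)) *
                   (e (\<alpha> * fR f (real j)) + e (- \<alpha> * fR f (real j))))" for N \<alpha>
  have key: "S N \<alpha> \<ge> - E N"
    if N: "real N \<ge> 1" "real N \<ge> 2 * KR" "real N \<ge> 8 * f0" and \<alpha>: "\<alpha> \<in> IN r N" for N \<alpha>
  proof -
    define n where "n = real N"
    have n1: "n \<ge> 1" using N n_def by simp
    define M where "M = poly F n"
    have rS: "r = Suc (r - 1)" using rs by simp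
    have nr: "n ^ r = n * n ^ (r - 1)" by (subst rS) (simp only: power_Suc diff_Suc_1)
    have Mge: "M \<ge> n ^ r / 2"
    proof -
      have "\<bar>poly R n\<bar> \<le> KR * n ^ (r - 1)" unfolding KR_def
        by (rule polybound[OF degR]) (use n1 in auto)
      moreover have "KR * n ^ (r - 1) \<le> (n / 2) * n ^ (r - 1)"
        using N n_def by (intro mult_right_mono) auto
      moreover have "coeff F r * n ^ r \<ge> 1 * n ^ r" using cF n1 by (intro mult_right_mono) auto
      ultimately show ?thesis unfolding M_def polyR nr by (simp add: field_simps)
    qed
    have "n ^ 1 \<le> n ^ r" by (rule power_increasing) (use n1 assms(2) in auto)
    then have "n ^ r \<ge> n" by simp
    then have M4: "M \<ge> 4 * f0" using Mge N n_def by linarith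
    have M0: "M > 0" using M4 f0 by linarith
    from \<alpha> obtain a :: int where a: "\<bar>\<alpha> - of_int a\<bar> \<le> n powr (- real r + 1 / real r)"
      unfolding IN_def n_def by (auto simp: abs_le_iff algebra_simps)
    define \<beta> where "\<beta> = \<alpha> - of_int a"
    define \<theta> where "\<theta> = 2 * pi * \<beta>"
    define P where "P t = poly (pderiv F) t * (1 - poly F t / M)" for t
    define Zv where "Zv = integral {0..n} P"
    have gN: "gN f N x = P x / Zv" for x
      unfolding gN_def Zv_def P_def fRF fRF' M_def n_def ..
    have trm: "Re (complex_of_real (gN f N (real j)) * (e (\<alpha> * fR f (real j)) + e (- \<alpha> * fR f (real j))))
        = 2 / Zv * (P (real j) * cos (\<theta> * poly F (real j)))" for j
    proof -
      obtain k where k: "fR f (real j) = of_int k"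
        using fR_int[of f "int j"] by auto
      have "Re (e (\<alpha> * fR f (real j))) = cos (\<theta> * poly F (real j))"
        using cos_shift[of a \<beta> k] unfolding Re_e k \<theta>_def \<beta>_def
        by (simp add: fRF[symmetric] k mult_ac)
      moreover have "Re (e (- \<alpha> * fR f (real j))) = Re (e (\<alpha> * fR f (real j)))"
        unfolding Re_e by simp
      ultimately show ?thesis by (simp add: gN)
    qed
    have Ssum: "S N \<alpha> = 2 / Zv * (\<Sum>j=1..N. P (real j) * cos (\<theta> * poly F (real j)))"
      unfolding S_def Re_sum trm by (simp add: sum_distrib_left)
    define A1 where "A1 = K1 * n ^ (r - 1)"
    define A2 where "A2 = K2 * n ^ (r - 2)"
    have b1: "\<bar>poly (pderiv F) x\<bar> \<le> A1" if "0 \<le> x" "x \<le> real N" for x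
      unfolding A1_def K1_def by (rule polybound[OF degF1]) (use that n1 n_def in auto)
    have b2: "\<bar>poly (pderiv (pderiv F)) x\<bar> \<le> A2" if "0 \<le> x" "x \<le> real N" for x
      unfolding A2_def K2_def by (rule polybound[OF degF2]) (use that n1 n_def in auto)
    have Mdef: "M = poly F (real N)" by (simp add: M_def n_def)
    have est: "S N \<alpha> \<ge> - (8 / M) * (2 * f0 + n * (A2 + A1\<^sup>2 / M + \<bar>\<theta>\<bar> * A1\<^sup>2))"
      using main_est[where \<theta>=\<theta> and N=N and M=M and F=F,
          OF pos mono Mdef M4[unfolded f0_def] b1 b2] n1
      unfolding Ssum Zv_def P_def[abs_def] n_def M_def f0_def by auto
    define \<delta> where "\<delta> = n powr (- real r + 1 / real r)"
    have th: "\<bar>\<theta>\<bar> \<le> 2 * pi * \<delta>" using a unfolding \<theta>_def \<beta>_def \<delta>_def by (simp add: abs_mult)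
    define iM where "iM = 1 / M"
    define iN where "iN = 2 / n ^ r"
    have iM: "0 \<le> iM" "iM \<le> iN" unfolding iM_def iN_def using Mge M0 n1
      by (auto simp: field_simps)
    have A0: "0 \<le> A2" "0 \<le> A1\<^sup>2" unfolding A2_def using K10 n1 by auto
    have "(8 / M) * (2 * f0 + n * (A2 + A1\<^sup>2 / M + \<bar>\<theta>\<bar> * A1\<^sup>2))
        = 8 * iM * (2 * f0 + n * (A2 + A1\<^sup>2 * iM + \<bar>\<theta>\<bar> * A1\<^sup>2))" by (simp add: iM_def)
    also have "\<dots> \<le> 8 * iN * (2 * f0 + n * (A2 + A1\<^sup>2 * iN + (2 * pi * \<delta>) * A1\<^sup>2))"
    proof -
      have h1: "A1\<^sup>2 * iM \<le> A1\<^sup>2 * iN" using iM A0 by (intro mult_left_mono) auto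
      have h2: "\<bar>\<theta>\<bar> * A1\<^sup>2 \<le> (2 * pi * \<delta>) * A1\<^sup>2" using th A0 by (intro mult_right_mono) auto
      have h3: "n * (A2 + A1\<^sup>2 * iM + \<bar>\<theta>\<bar> * A1\<^sup>2) \<le> n * (A2 + A1\<^sup>2 * iN + (2 * pi * \<delta>) * A1\<^sup>2)"
        using h1 h2 n1 by (intro mult_left_mono) auto
      have h4: "0 \<le> 2 * f0 + n * (A2 + A1\<^sup>2 * iM + \<bar>\<theta>\<bar> * A1\<^sup>2)"
        using f0 n1 A0 iM by (intro add_nonneg_nonneg mult_nonneg_nonneg) auto
      have h5: "0 \<le> 8 * iN" using iM by simp
      show ?thesis using h3 h4 h5 iM by (intro mult_mono) auto
    qed
    also have "\<dots> = 32 * f0 / n ^ r + 16 * K2 * (n * n ^ (r - 2) / n ^ r)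
        + 32 * K1\<^sup>2 * (n * (n ^ (r - 1))\<^sup>2 / (n ^ r)\<^sup>2) + 32 * pi * K1\<^sup>2 * (\<delta> * (n * (n ^ (r - 1))\<^sup>2 / n ^ r))"
      unfolding iN_def A1_def A2_def using n1 by (simp add: field_simps power2_eq_square)
    also have "n * n ^ (r - 2) / n ^ r = 1 / n" using n1 rs by (simp add: field_simps eval_nat_numeral)
    also have "n * (n ^ (r - 1))\<^sup>2 / (n ^ r)\<^sup>2 = 1 / n" using n1 rs by (simp add: field_simps power2_eq_square eval_nat_numeral)
    also have "\<delta> * (n * (n ^ (r - 1))\<^sup>2 / n ^ r) = n powr (1 / real r - 1)"
    proof -
      have "n * (n ^ (r - 1))\<^sup>2 / n ^ r = n ^ (r - 1)" using n1 rs by (simp add: field_simps power2_eq_square eval_nat_numeral)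
      also have "\<dots> = n powr (real (r - 1))" using n1 by (rule powr_realpow[symmetric, OF order.strict_trans2[OF zero_less_one]])
      also have "real (r - 1) = real r - 1" using rs by simp
      finally have "\<delta> * (n * (n ^ (r - 1))\<^sup>2 / n ^ r) = n powr (- real r + 1 / real r) * n powr (real r - 1)"
        by (simp add: \<delta>_def)
      also have "\<dots> = n powr (1 / real r - 1)" using n1 by (simp add: powr_add[symmetric])
      finally show ?thesis .
    qed
    also have "32 * f0 / n ^ r \<le> 32 * f0 / n" using \<open>n ^ r \<ge> n\<close> n1 f0
      by (intro divide_left_mono) auto
    finally have "(8 / M) * (2 * f0 + n * (A2 + A1\<^sup>2 / M + \<bar>\<theta>\<bar> * A1\<^sup>2)) \<le> E N"
      unfolding E_def n_def by (simp add: add_divide_distrib)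
    then show ?thesis using est by linarith
  qed
  have ev: "eventually (\<lambda>N. real N \<ge> 1 \<and> real N \<ge> 2 * KR \<and> real N \<ge> 8 * f0) sequentially"
  proof -
    define N0 where "N0 = nat \<lceil>1 + 2 * KR + 8 * f0\<rceil>"
    have "real N \<ge> 1 \<and> real N \<ge> 2 * KR \<and> real N \<ge> 8 * f0" if "N \<ge> N0" for N
    proof -
      have "real N \<ge> real N0" using that by simp
      moreover have "real N0 \<ge> 1 + 2 * KR + 8 * f0" unfolding N0_def by linarith
      ultimately show ?thesis using K10 f0 by linarith
    qed
    then show ?thesis unfolding eventually_sequentially by blast
  qed
  have "0 \<le> liminf (\<lambda>N. INF \<alpha>\<in>IN r N. ereal (S N \<alpha>))"
  proof (rule le_Liminf_iff[THEN iffD2], intro allI impI)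
    fix y :: ereal assume y: "y < 0"
    have evy: "eventually (\<lambda>N. y < ereal (- E N)) sequentially"
    proof (cases y)
      case (real c)
      then have "c < 0" using y by simp
      then have "eventually (\<lambda>N. E N < - c) sequentially" using order_tendstoD(2)[OF Elim, of "-c"] by simp
      then show ?thesis by eventually_elim (simp add: real)
    next
      case PInf then show ?thesis using y by simp
    next
      case MInf then show ?thesis by simp
    qed
    show "eventually (\<lambda>N. y < (INF \<alpha>\<in>IN r N. ereal (S N \<alpha>))) sequentially"
      using evy ev
    proof eventually_elim
      case (elim N)
      have "ereal (- E N) \<le> (INF \<alpha>\<in>IN r N. ereal (S N \<alpha>))"
        using key elim(2) by (intro INF_greatest) auto
      then show ?case using elim(1) by order
    qed
  qed
  then show ?thesis unfolding S_def .
qed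

end
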